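(* Let $H$ be a graph and $(G,\sigma)$ a signed graph. Then $\tilde H$ is a topological minor of $(G,\sigma)$ if and only if $\tilde H$ is a total topological minor of $(G,\sigma)$.
   Context: A signed graph $(G,\sigma)$ is a graph (loops and parallel edges allowed) with a signature $\sigma:E(G)\to\{+,-\}$; the sign of a path or cycle is the product of the signs of its edges. For a graph $H$, $\tilde H$ is the signed graph obtained by replacing each edge of $H$ by two parallel edges, one positive and one negative. A signed graph $(H,\pi)$ is a topological minor of $(G,\sigma)$ if (i) some subdivision of $H$ is isomorphic to a subgraph $G_1$ of $G$, and (ii) for every cycle $C$ of $(H,\pi)$, the image of $C$ in $G_1$ has in $(G,\sigma)$ the same sign as $C$ has in $(H,\pi)$. It is a total topological minor if (i) holds and (ii') for every edge $e$ of $H$, the path $P_e$ representing $e$ in $G_1$ has sign $\pi(e)$ in $(G,\sigma)$. *)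

theory Defs
  imports Main
begin

text \<open>A (finite) graph with loops and parallel edges: vertex set V, edge set E,
 and an endpoint map assigning each edge its set of one (loop) or two endpoints.\<close>
definition mgraph :: "'v set \<Rightarrow> 'e set \<Rightarrow> ('e \<Rightarrow> 'v set) \<Rightarrow> bool" where
  "mgraph V E ends \<longleftrightarrow> finite V \<and> finite E \<and>
     (\<forall>e\<in>E. ends e \<subseteq> V \<and> 1 \<le> card (ends e) \<and> card (ends e) \<le> 2)"

definition signature :: "'e set \<Rightarrow> ('e \<Rightarrow> int) \<Rightarrow> bool" where
  "signature E \<sigma> \<longleftrightarrow> (\<forall>e\<in>E. \<sigma> e = 1 \<or> \<sigma> e = -1)"

text \<open>A cycle of a graph: vertex list vs and edge list es of the same length n \<ge> 1,
 no repeated vertices or edges, edge i joining vs!i and vs!((i+1) mod n).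
 (n = 1: a loop; n = 2: two parallel edges.)\<close>
definition is_cycle :: "'v set \<Rightarrow> 'e set \<Rightarrow> ('e \<Rightarrow> 'v set) \<Rightarrow> 'v list \<Rightarrow> 'e list \<Rightarrow> bool" where
  "is_cycle V E ends vs es \<longleftrightarrow> length vs = length es \<and> es \<noteq> [] \<and>
     distinct vs \<and> distinct es \<and> set vs \<subseteq> V \<and>
     (\<forall>i<length es. es!i \<in> E \<and> ends (es!i) = {vs!i, vs!((i+1) mod length es)})"

definition is_walk :: "'v set \<Rightarrow> 'e set \<Rightarrow> ('e \<Rightarrow> 'v set) \<Rightarrow> 'v list \<Rightarrow> 'e list \<Rightarrow> bool" where
  "is_walk V E ends vs es \<longleftrightarrow> length vs = length es + 1 \<and> es \<noteq> [] \<and>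
     distinct es \<and> set vs \<subseteq> V \<and>
     (\<forall>i<length es. es!i \<in> E \<and> ends (es!i) = {vs!i, vs!(i+1)})"

definition internal :: "'v list \<Rightarrow> 'v set" where
  "internal vs = set (tl (butlast vs))"

text \<open>An embedding of a subdivision of H = (VH,EH,endsH) into G = (VG,EG,endsG):
 branch vertices \<phi> (injective), and for every edge e of H a path P e = (vs, es) of G
 representing e (a path between the images of the two ends of e, or a cycle through
 the image of the end of e if e is a loop); the paths are internally disjoint from each
 other and from the branch vertices, and pairwise edge-disjoint. The union of the
 branch vertices and the paths is the subgraph G1 isomorphic to a subdivision of H.\<close>
definition subdiv_embedding ::
  "'a set \<Rightarrow> 'b set \<Rightarrow> ('b \<Rightarrow> 'a set) \<Rightarrow> 'v set \<Rightarrow> 'e set \<Rightarrow> ('e \<Rightarrow> 'v set)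
     \<Rightarrow> ('a \<Rightarrow> 'v) \<Rightarrow> ('b \<Rightarrow> 'v list \<times> 'e list) \<Rightarrow> bool" where
  "subdiv_embedding VH EH endsH VG EG endsG \<phi> P \<longleftrightarrow>
     inj_on \<phi> VH \<and> \<phi> ` VH \<subseteq> VG \<and>
     (\<forall>e\<in>EH. let vs = fst (P e); es = snd (P e) in
        is_walk VG EG endsG vs es \<and>
        {hd vs, last vs} = \<phi> ` endsH e \<and>
        (if card (endsH e) = 2 then distinct vs else hd vs = last vs \<and> distinct (tl vs)) \<and>
        internal vs \<inter> \<phi> ` VH = {}) \<and>
     (\<forall>e\<in>EH. \<forall>e'\<in>EH. e \<noteq> e' \<longrightarrow>
        internal (fst (P e)) \<inter> set (fst (P e')) = {} \<and>
        set (snd (P e)) \<inter> set (snd (P e')) = {})"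

definition sign_of :: "('e \<Rightarrow> int) \<Rightarrow> 'e set \<Rightarrow> int" where
  "sign_of \<sigma> F = (\<Prod>e\<in>F. \<sigma> e)"

definition top_minor ::
  "'a set \<Rightarrow> 'b set \<Rightarrow> ('b \<Rightarrow> 'a set) \<Rightarrow> ('b \<Rightarrow> int) \<Rightarrow>
   'v set \<Rightarrow> 'e set \<Rightarrow> ('e \<Rightarrow> 'v set) \<Rightarrow> ('e \<Rightarrow> int) \<Rightarrow> bool" where
  "top_minor VH EH endsH \<pi> VG EG endsG \<sigma> \<longleftrightarrow>
     (\<exists>\<phi> P. subdiv_embedding VH EH endsH VG EG endsG \<phi> P \<and>
        (\<forall>vs es. is_cycle VH EH endsH vs es \<longrightarrow>
           sign_of \<sigma> (\<Union>e\<in>set es. set (snd (P e))) = sign_of \<pi> (set es)))"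

definition total_top_minor ::
  "'a set \<Rightarrow> 'b set \<Rightarrow> ('b \<Rightarrow> 'a set) \<Rightarrow> ('b \<Rightarrow> int) \<Rightarrow>
   'v set \<Rightarrow> 'e set \<Rightarrow> ('e \<Rightarrow> 'v set) \<Rightarrow> ('e \<Rightarrow> int) \<Rightarrow> bool" where
  "total_top_minor VH EH endsH \<pi> VG EG endsG \<sigma> \<longleftrightarrow>
     (\<exists>\<phi> P. subdiv_embedding VH EH endsH VG EG endsG \<phi> P \<and>
        (\<forall>e\<in>EH. sign_of \<sigma> (set (snd (P e))) = \<pi> e))"

text \<open>H-tilde: each edge e of H replaced by the two parallel edges (e,True) (positive)
 and (e,False) (negative).\<close>
definition tilde_edges :: "'b set \<Rightarrow> ('b \<times> bool) set" where
  "tilde_edges E = E \<times> UNIV"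

definition tilde_ends :: "('b \<Rightarrow> 'a set) \<Rightarrow> ('b \<times> bool) \<Rightarrow> 'a set" where
  "tilde_ends ends = (\<lambda>(e, s). ends e)"

definition tilde_sig :: "('b \<times> bool) \<Rightarrow> int" where
  "tilde_sig = (\<lambda>(e, s). if s then 1 else -1)"

end

theory Submission
  imports Defs
begin

lemma sign_pm:
  assumes "finite F" "F \<subseteq> EG" "signature EG \<sigma>"
  shows "sign_of \<sigma> F = 1 \<or> sign_of \<sigma> F = -1"
  using assms(1,2)
proof (induction F rule: finite_induct)
  case empty then show ?case by (simp add: sign_of_def)
next
  case (insert x F)
  then have "\<sigma> x = 1 \<or> \<sigma> x = -1" using assms(3) by (auto simp: signature_def)
  with insert show ?case by (auto simp: sign_of_def)
qed

lemma sign_Union: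
  assumes "finite I" "\<forall>i\<in>I. finite (A i)" "\<forall>i\<in>I. \<forall>j\<in>I. i \<noteq> j \<longrightarrow> A i \<inter> A j = {}"
  shows "sign_of \<sigma> (\<Union>i\<in>I. A i) = (\<Prod>i\<in>I. sign_of \<sigma> (A i))"
  unfolding sign_of_def using prod.UNION_disjoint[OF assms] .

lemma emb_perm:
  assumes emb: "subdiv_embedding VH EH' endsH' VG EG endsG \<phi> P"
    and g: "bij_betw g EH' EH'" and ge: "\<forall>x\<in>EH'. endsH' (g x) = endsH' x"
  shows "subdiv_embedding VH EH' endsH' VG EG endsG \<phi> (P \<circ> g)"
proof -
  have gin: "g x \<in> EH'" if "x \<in> EH'" for x using g that by (auto simp: bij_betw_def)
  have ginj: "g x \<noteq> g y" if "x \<in> EH'" "y \<in> EH'" "x \<noteq> y" for x y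
    using g that by (auto simp: bij_betw_def inj_on_def)
  show ?thesis
    using emb unfolding subdiv_embedding_def
    apply (intro conjI)
    apply blast
    apply blast
    subgoal
      apply (intro ballI)
      subgoal for x using gin[of x] ge by (auto simp: Let_def)
      done
    subgoal
      apply (intro ballI impI)
      subgoal for x y using gin[of x] gin[of y] ginj[of x y] by (simp add: Let_def)
      done
    done
qed

theorem mainTheorem4:
  fixes VH :: "'a set" and EH :: "'b set" and endsH :: "'b \<Rightarrow> 'a set"
    and VG :: "'v set" and EG :: "'e set" and endsG :: "'e \<Rightarrow> 'v set"
    and \<sigma> :: "'e \<Rightarrow> int"
  assumes "mgraph VH EH endsH"
    and "mgraph VG EG endsG"
    and "signature EG \<sigma>"
  shows "top_minor VH (tilde_edges EH) (tilde_ends endsH) tilde_sig VG EG endsG \<sigma>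
     \<longleftrightarrow> total_top_minor VH (tilde_edges EH) (tilde_ends endsH) tilde_sig VG EG endsG \<sigma>"
proof
  assume "total_top_minor VH (tilde_edges EH) (tilde_ends endsH) tilde_sig VG EG endsG \<sigma>"
  then obtain \<phi> P where emb: "subdiv_embedding VH (tilde_edges EH) (tilde_ends endsH) VG EG endsG \<phi> P"
    and sg: "\<forall>e\<in>tilde_edges EH. sign_of \<sigma> (set (snd (P e))) = tilde_sig e"
    unfolding total_top_minor_def by blast
  have disj: "\<forall>e\<in>tilde_edges EH. \<forall>e'\<in>tilde_edges EH. e \<noteq> e' \<longrightarrow> set (snd (P e)) \<inter> set (snd (P e')) = {}"
    using emb unfolding subdiv_embedding_def by blast
  show "top_minor VH (tilde_edges EH) (tilde_ends endsH) tilde_sig VG EG endsG \<sigma>"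
    unfolding top_minor_def
  proof (intro exI conjI allI impI)
    show "subdiv_embedding VH (tilde_edges EH) (tilde_ends endsH) VG EG endsG \<phi> P" by (rule emb)
    fix vs es assume cyc: "is_cycle VH (tilde_edges EH) (tilde_ends endsH) vs es"
    have sub: "set es \<subseteq> tilde_edges EH" using cyc unfolding is_cycle_def
      by (metis in_set_conv_nth subsetI)
    have "sign_of \<sigma> (\<Union>e\<in>set es. set (snd (P e))) = (\<Prod>e\<in>set es. sign_of \<sigma> (set (snd (P e))))"
    proof (rule sign_Union)
      show "\<forall>i\<in>set es. \<forall>j\<in>set es. i \<noteq> j \<longrightarrow> set (snd (P i)) \<inter> set (snd (P j)) = {}"
        using sub disj by blast
    qed auto
    also have "\<dots> = (\<Prod>e\<in>set es. tilde_sig e)"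
      using sub sg by (intro prod.cong) auto
    finally show "sign_of \<sigma> (\<Union>e\<in>set es. set (snd (P e))) = sign_of tilde_sig (set es)"
      by (simp add: sign_of_def)
  qed
next
  assume "top_minor VH (tilde_edges EH) (tilde_ends endsH) tilde_sig VG EG endsG \<sigma>"
  then obtain \<phi> P where emb: "subdiv_embedding VH (tilde_edges EH) (tilde_ends endsH) VG EG endsG \<phi> P"
    and cy: "\<And>vs es. is_cycle VH (tilde_edges EH) (tilde_ends endsH) vs es \<Longrightarrow>
           sign_of \<sigma> (\<Union>e\<in>set es. set (snd (P e))) = sign_of tilde_sig (set es)"
    unfolding top_minor_def by blast
  define S where "S x = sign_of \<sigma> (set (snd (P x)))" for x
  have walk: "is_walk VG EG endsG (fst (P x)) (snd (P x))" if "x \<in> tilde_edges EH" for x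
    using emb that unfolding subdiv_embedding_def by (auto simp: Let_def)
  have Spm: "S x = 1 \<or> S x = -1" if "x \<in> tilde_edges EH" for x
    unfolding S_def apply (rule sign_pm[OF _ _ assms(3)])
    using walk[OF that] unfolding is_walk_def by (auto simp: in_set_conv_nth)
  have disj: "\<forall>e\<in>tilde_edges EH. \<forall>e'\<in>tilde_edges EH. e \<noteq> e' \<longrightarrow> set (snd (P e)) \<inter> set (snd (P e')) = {}"
    using emb unfolding subdiv_embedding_def by blast
  have key: "(S (e,True) = 1 \<and> S (e,False) = -1) \<or> (card (endsH e) = 2 \<and> S (e,True) = -1 \<and> S (e,False) = 1)"
    if e: "e \<in> EH" for e
  proof -
    have ev: "endsH e \<subseteq> VH" "1 \<le> card (endsH e)" "card (endsH e) \<le> 2"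
      using assms(1) e unfolding mgraph_def by auto
    have inT: "(e,s) \<in> tilde_edges EH" for s using e by (simp add: tilde_edges_def)
    show ?thesis
    proof (cases "card (endsH e) = 1")
      case True
      then obtain v where v: "endsH e = {v}" by (auto simp: card_Suc_eq)
      have loop: "S (e,s) = tilde_sig (e,s)" for s
      proof -
        have "is_cycle VH (tilde_edges EH) (tilde_ends endsH) [v] [(e,s)]"
          using v ev inT unfolding is_cycle_def by (auto simp: tilde_ends_def)
        from cy[OF this] show ?thesis by (simp add: S_def sign_of_def)
      qed
      show ?thesis using loop[of True] loop[of False] by (simp add: tilde_sig_def)
    next
      case False
      with ev have c2: "card (endsH e) = 2" by auto
      then obtain u w where uw: "endsH e = {u,w}" "u \<noteq> w" by (auto simp: card_Suc_eq numeral_2_eq_2)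
      have "is_cycle VH (tilde_edges EH) (tilde_ends endsH) [u,w] [(e,True),(e,False)]"
        using uw ev inT unfolding is_cycle_def
        apply (simp add: tilde_ends_def)
        apply (intro allI impI)
        subgoal for i by (cases i) (auto simp: insert_commute)
        done
      from cy[OF this] have "sign_of \<sigma> (set (snd (P (e,True))) \<union> set (snd (P (e,False)))) = -1"
        by (simp add: sign_of_def tilde_sig_def)
      moreover have "set (snd (P (e,True))) \<inter> set (snd (P (e,False))) = {}"
        using disj inT by blast
      ultimately have "S (e,True) * S (e,False) = -1"
        unfolding S_def sign_of_def by (simp add: prod.union_disjoint)
      then show ?thesis using Spm[OF inT[of True]] Spm[OF inT[of False]] c2 by auto
    qed
  qed
  define g where "g = (\<lambda>(e::'b, s::bool). (e, if S (e,True) = 1 then s else \<not> s))"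
  have gg: "g (g x) = x" for x by (cases x) (auto simp: g_def)
  have gin: "g x \<in> tilde_edges EH" if "x \<in> tilde_edges EH" for x
    using that by (cases x) (auto simp: g_def tilde_edges_def)
  have bij: "bij_betw g (tilde_edges EH) (tilde_edges EH)"
    apply (rule bij_betw_byWitness[where f'=g]) using gg gin by auto
  have ge: "\<forall>x\<in>tilde_edges EH. tilde_ends endsH (g x) = tilde_ends endsH x"
    by (auto simp: g_def tilde_ends_def)
  show "total_top_minor VH (tilde_edges EH) (tilde_ends endsH) tilde_sig VG EG endsG \<sigma>"
    unfolding total_top_minor_def
  proof (intro exI conjI ballI)
    show "subdiv_embedding VH (tilde_edges EH) (tilde_ends endsH) VG EG endsG \<phi> (P \<circ> g)"
      by (rule emb_perm[OF emb bij ge])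
    fix x assume x: "x \<in> tilde_edges EH"
    obtain e s where es: "x = (e,s)" "e \<in> EH" using x by (cases x) (auto simp: tilde_edges_def)
    show "sign_of \<sigma> (set (snd ((P \<circ> g) x))) = tilde_sig x"
      using key[OF es(2)] unfolding es(1)
      by (cases s) (auto simp: g_def S_def tilde_sig_def)
  qed
qed

end
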